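(* For every even integer $k\ge 0$ and every integer $d\ge k$, every $d$-regular graph contains a spanning subgraph in which every vertex has degree $k$ or $k-1$.
   Context: All graphs are finite and simple. A spanning subgraph of $H=(V,E)$ is a graph $(V,E')$ with $E'\subseteq E$. *)

theory Defs
  imports Main
begin

definition simple_graph :: "'a set \<Rightarrow> 'a set set \<Rightarrow> bool" where
  "simple_graph V E \<longleftrightarrow> finite V \<and> (\<forall>e\<in>E. e \<subseteq> V \<and> card e = 2)"

definition degree :: "'a set set \<Rightarrow> 'a \<Rightarrow> nat" where
  "degree E v = card {e \<in> E. v \<in> e}"

definition regular :: "'a set \<Rightarrow> 'a set set \<Rightarrow> nat \<Rightarrow> bool" where
  "regular V E d \<longleftrightarrow> (\<forall>v\<in>V. degree E v = d)"

end

theory Submission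
  imports Defs "HOL-Library.Transitive_Closure_Table"
begin


definition indeg :: "'a set set \<Rightarrow> ('a set \<Rightarrow> 'a) \<Rightarrow> 'a \<Rightarrow> nat" where
  "indeg E \<sigma> v = card {e\<in>E. \<sigma> e = v}"

definition arc :: "'a set set \<Rightarrow> ('a set \<Rightarrow> 'a) \<Rightarrow> 'a \<Rightarrow> 'a \<Rightarrow> bool" where
  "arc E \<sigma> x y \<longleftrightarrow> (\<exists>e\<in>E. x \<in> e \<and> \<sigma> e = y \<and> x \<noteq> y)"

lemma card2_eq: "card e = 2 \<Longrightarrow> x \<in> e \<Longrightarrow> y \<in> e \<Longrightarrow> x \<noteq> y \<Longrightarrow> e = {x,y}"
  by (auto simp: card_2_iff)

lemma path_keep:
  assumes "rtrancl_path (arc E \<sigma>) a ys z" "x \<notin> set (a # ys)"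
    and "e \<in> E" "card e = 2" "x \<in> e" "\<sigma> e = y" "x \<noteq> y" "y \<in> e"
  shows "rtrancl_path (arc E (\<sigma>(e := x))) a ys z"
  using assms(1,2)
proof (induction ys arbitrary: a)
  case Nil
  then have "a = z" by (auto elim: rtrancl_path.cases)
  then show ?case by (simp add: rtrancl_path.base)
next
  case (Cons b ys)
  from Cons.prems(1) have h1: "arc E \<sigma> a b" and h2: "rtrancl_path (arc E \<sigma>) b ys z"
    by (auto elim: rtrancl_path.cases)
  from h1 obtain e' where e': "e' \<in> E" "a \<in> e'" "\<sigma> e' = b" "a \<noteq> b"
    unfolding arc_def by blast
  have "e' \<noteq> e"
  proof
    assume "e' = e"
    then have "e = {x, y}" using card2_eq[OF assms(4,5,8,7)] by auto
    then show False using e' Cons.prems \<open>e' = e\<close> \<open>\<sigma> e = y\<close> by auto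
  qed
  then have "arc E (\<sigma>(e := x)) a b" using e' unfolding arc_def by auto
  moreover have "rtrancl_path (arc E (\<sigma>(e := x))) b ys z" using Cons.IH[OF h2] Cons.prems(2) by (simp add: fun_upd_def)
  ultimately show ?case by (rule rtrancl_path.step)
qed

lemma path_flip:
  assumes "rtrancl_path (arc E \<sigma>) x ys z" "distinct (x # ys)"
    and "\<forall>e\<in>E. card e = 2 \<and> \<sigma> e \<in> e" "finite E"
  shows "\<exists>\<sigma>'. (\<forall>e\<in>E. \<sigma>' e \<in> e) \<and>
     (\<forall>v. indeg E \<sigma>' v + (if v = z then 1 else 0) = indeg E \<sigma> v + (if v = x then 1 else 0))"
  using assms
proof (induction ys arbitrary: x \<sigma>)
  case Nil
  then have "x = z" by (auto elim: rtrancl_path.cases)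
  then show ?case using Nil by auto
next
  case (Cons y ys)
  from Cons.prems(1) have h1: "arc E \<sigma> x y" and h2: "rtrancl_path (arc E \<sigma>) y ys z"
    by (auto elim: rtrancl_path.cases)
  from h1 obtain e where e: "e \<in> E" "x \<in> e" "\<sigma> e = y" "x \<noteq> y"
    unfolding arc_def by blast
  define \<sigma>0 where "\<sigma>0 = \<sigma>(e := x)"
  have v0: "\<forall>e\<in>E. card e = 2 \<and> \<sigma>0 e \<in> e" using Cons.prems e unfolding \<sigma>0_def by auto
  have p0: "rtrancl_path (arc E \<sigma>0) y ys z"
    unfolding \<sigma>0_def
  proof (rule path_keep[OF h2 _ e(1) _ e(2) e(3) e(4)])
    show "x \<notin> set (y # ys)" using Cons.prems(2) by simp
    show "card e = 2" "y \<in> e" using Cons.prems(3) e by auto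
  qed
  obtain \<sigma>' where s': "\<forall>e\<in>E. \<sigma>' e \<in> e"
    "\<forall>v. indeg E \<sigma>' v + (if v = z then 1 else 0) = indeg E \<sigma>0 v + (if v = y then 1 else 0)"
    using Cons.IH[OF p0 _ v0 Cons.prems(4)] Cons.prems(2) by auto
  have d0: "indeg E \<sigma>0 v + (if v = y then 1 else 0) = indeg E \<sigma> v + (if v = x then 1 else 0)" for v
  proof -
    have A: "{e'\<in>E. \<sigma>0 e' = v} = {e'\<in>E - {e}. \<sigma> e' = v} \<union> (if v = x then {e} else {})"
      using e unfolding \<sigma>0_def by auto
    have B: "{e'\<in>E. \<sigma> e' = v} = {e'\<in>E - {e}. \<sigma> e' = v} \<union> (if v = y then {e} else {})"
      using e by auto
    have f: "finite {e'\<in>E - {e}. \<sigma> e' = v}" using Cons.prems by auto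
    show ?thesis unfolding indeg_def A B using f e by (auto simp: card_insert_if)
  qed
  have "indeg E \<sigma>' v + (if v = z then 1 else 0) = indeg E \<sigma> v + (if v = x then 1 else 0)" for v
    using s'(2)[rule_format, of v] d0[of v] by simp
  then show ?case using s'(1) by blast
qed


lemma sum_indeg:
  assumes "finite E" "\<forall>e\<in>E. \<sigma> e \<in> R \<longrightarrow> True" "finite R"
  shows "(\<Sum>v\<in>R. indeg E \<sigma> v) = card {e\<in>E. \<sigma> e \<in> R}"
proof -
  have "{e\<in>E. \<sigma> e \<in> R} = (\<Union>v\<in>R. {e\<in>E. \<sigma> e = v})" by auto
  moreover have "card (\<Union>v\<in>R. {e\<in>E. \<sigma> e = v}) = (\<Sum>v\<in>R. card {e\<in>E. \<sigma> e = v})"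
    by (rule card_UN_disjoint) (use assms in auto)
  ultimately show ?thesis unfolding indeg_def by simp
qed

lemma hakimi:
  fixes V :: "'a set" and E :: "'a set set" and t :: "'a \<Rightarrow> nat"
  assumes fin: "finite V" and EV: "\<forall>e\<in>E. e \<subseteq> V \<and> card e = 2"
    and tsum: "(\<Sum>v\<in>V. t v) = card E"
    and cond: "\<forall>S\<subseteq>V. card {e\<in>E. e \<subseteq> S} \<le> (\<Sum>v\<in>S. t v)"
  shows "\<exists>\<sigma>. (\<forall>e\<in>E. \<sigma> e \<in> e) \<and> (\<forall>v\<in>V. indeg E \<sigma> v = t v)"
proof -
  have finE: "finite E"
    by (rule finite_subset[of E "Pow V"]) (use EV fin in auto)
  define P where "P \<sigma> \<longleftrightarrow> (\<forall>e\<in>E. \<sigma> e \<in> e)" for \<sigma> :: "'a set \<Rightarrow> 'a"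
  define \<Phi> where "\<Phi> \<sigma> = (\<Sum>v\<in>V. (indeg E \<sigma> v - t v) + (t v - indeg E \<sigma> v))" for \<sigma>
  have "P (\<lambda>e. SOME x. x \<in> e)"
    unfolding P_def
  proof
    fix e assume "e \<in> E"
    then have "e \<noteq> {}" using EV by (auto simp: card_2_iff)
    then show "(SOME x. x \<in> e) \<in> e" by (simp add: some_in_eq)
  qed
  then obtain \<sigma> where P\<sigma>: "P \<sigma>" and minim: "\<And>\<sigma>'. P \<sigma>' \<Longrightarrow> \<Phi> \<sigma> \<le> \<Phi> \<sigma>'"
    using ex_has_least_nat[of P _ \<Phi>] by blast
  have valid: "\<forall>e\<in>E. card e = 2 \<and> \<sigma> e \<in> e" using P\<sigma> EV unfolding P_def by auto
  have sumin: "(\<Sum>v\<in>V. indeg E \<sigma> v) = card E"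
  proof -
    have "{e\<in>E. \<sigma> e \<in> V} = E" using valid EV by auto
    then show ?thesis using sum_indeg[OF finE _ fin, of \<sigma>] by simp
  qed
  show ?thesis
  proof (cases "\<forall>v\<in>V. indeg E \<sigma> v \<le> t v")
    case True
    have "\<forall>v\<in>V. indeg E \<sigma> v = t v"
    proof (rule ccontr)
      assume "\<not> (\<forall>v\<in>V. indeg E \<sigma> v = t v)"
      then obtain v where "v \<in> V" "indeg E \<sigma> v < t v" using True by force
      then have "(\<Sum>v\<in>V. indeg E \<sigma> v) < (\<Sum>v\<in>V. t v)"
        using True fin by (intro sum_strict_mono_ex1) auto
      then show False using sumin tsum by simp
    qed
    then show ?thesis using P\<sigma> unfolding P_def by blast
  next
    case False
    then obtain u where uV: "u \<in> V" and ut: "t u < indeg E \<sigma> u" by force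
    define R where "R = {w. (arc E \<sigma>)\<^sup>*\<^sup>* w u}"
    have uR: "u \<in> R" unfolding R_def by simp
    have RV: "R \<subseteq> V"
    proof
      fix w assume "w \<in> R"
      then have "(arc E \<sigma>)\<^sup>*\<^sup>* w u" unfolding R_def by simp
      then show "w \<in> V"
      proof (induction rule: converse_rtranclp_induct)
        case base then show ?case using uV by simp
      next
        case (step w y)
        then show ?case using EV unfolding arc_def by auto
      qed
    qed
    show ?thesis
    proof (cases "\<exists>w\<in>R. indeg E \<sigma> w < t w")
      case True
      then obtain w where wR: "w \<in> R" and wt: "indeg E \<sigma> w < t w" by blast
      then have "(arc E \<sigma>)\<^sup>*\<^sup>* w u" unfolding R_def by simp
      then obtain xs where "rtrancl_path (arc E \<sigma>) w xs u"
        by (auto simp: rtranclp_eq_rtrancl_path)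
      then obtain xs' where p: "rtrancl_path (arc E \<sigma>) w xs' u" and d: "distinct (w # xs')"
        by (rule rtrancl_path_distinct)
      obtain \<sigma>' where v': "\<forall>e\<in>E. \<sigma>' e \<in> e" and
        ch: "\<forall>v. indeg E \<sigma>' v + (if v = u then 1 else 0) = indeg E \<sigma> v + (if v = w then 1 else 0)"
        using path_flip[OF p d valid finE] by blast
      have wu: "w \<noteq> u" using wt ut by auto
      have le: "\<forall>v\<in>V. (indeg E \<sigma>' v - t v) + (t v - indeg E \<sigma>' v) \<le> (indeg E \<sigma> v - t v) + (t v - indeg E \<sigma> v)"
      proof
        fix v assume "v \<in> V"
        have "v = u \<or> v = w \<or> (v \<noteq> u \<and> v \<noteq> w)" by blast
        then show "(indeg E \<sigma>' v - t v) + (t v - indeg E \<sigma>' v) \<le> (indeg E \<sigma> v - t v) + (t v - indeg E \<sigma> v)"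
          using ch[rule_format, of v] wu ut wt by auto
      qed
      have "\<Phi> \<sigma>' < \<Phi> \<sigma>"
        unfolding \<Phi>_def
        apply (rule sum_strict_mono_ex1[OF fin le])
        apply (rule bexI[of _ u])
        using ch[rule_format, of u] wu ut uV by auto
      moreover have "P \<sigma>'" using v' unfolding P_def by blast
      ultimately show ?thesis using minim by fastforce
    next
      case False
      have finR: "finite R" using RV fin finite_subset by blast
      have "(\<Sum>v\<in>R. t v) < (\<Sum>v\<in>R. indeg E \<sigma> v)"
        using False uR ut finR by (intro sum_strict_mono_ex1) (auto simp: not_less)
      also have "\<dots> = card {e\<in>E. \<sigma> e \<in> R}" using sum_indeg[OF finE _ finR] by simp
      also have "\<dots> \<le> card {e\<in>E. e \<subseteq> R}"
      proof (rule card_mono)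
        show "finite {e\<in>E. e \<subseteq> R}" using finE by simp
        show "{e\<in>E. \<sigma> e \<in> R} \<subseteq> {e\<in>E. e \<subseteq> R}"
        proof safe
          fix e x assume e: "e \<in> E" "\<sigma> e \<in> R" "x \<in> e"
          show "x \<in> R"
          proof (cases "x = \<sigma> e")
            case True then show ?thesis using e by simp
          next
            case False
            then have "arc E \<sigma> x (\<sigma> e)" using e unfolding arc_def by blast
            then show ?thesis using e(2) unfolding R_def
              by (auto intro: converse_rtranclp_into_rtranclp)
          qed
        qed
      qed
      also have "\<dots> \<le> (\<Sum>v\<in>R. t v)" using cond RV by blast
      finally show ?thesis by simp
    qed
  qed
qed



lemma degree_sum:
  assumes "finite E"
  shows "degree E v = (\<Sum>e\<in>E. if v \<in> e then 1 else 0)"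
  unfolding degree_def using sum.inter_filter[OF assms, of "\<lambda>_. 1::nat" "\<lambda>e. v\<in>e"] by simp

lemma degree_sum_swap:
  assumes "finite E" "finite S"
  shows "(\<Sum>v\<in>S. degree E v) = (\<Sum>e\<in>E. card (e \<inter> S))"
proof -
  have "(\<Sum>v\<in>S. degree E v) = (\<Sum>v\<in>S. \<Sum>e\<in>E. if v \<in> e then 1 else 0)"
    using degree_sum[OF assms(1)] by simp
  also have "\<dots> = (\<Sum>e\<in>E. \<Sum>v\<in>S. if v \<in> e then 1 else 0)" by (rule sum.swap)
  also have "\<dots> = (\<Sum>e\<in>E. card (e \<inter> S))"
  proof (rule sum.cong)
    fix e assume "e \<in> E"
    have "(\<Sum>v\<in>S. if v \<in> e then 1 else 0) = card {v\<in>S. v \<in> e}"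
      using sum.inter_filter[OF assms(2), of "\<lambda>_. 1::nat" "\<lambda>v. v\<in>e"] by simp
    also have "{v\<in>S. v \<in> e} = e \<inter> S" by auto
    finally show "(\<Sum>v\<in>S. if v \<in> e then 1 else 0) = card (e \<inter> S)" .
  qed simp
  finally show ?thesis .
qed

lemma simple_finE: "simple_graph V E \<Longrightarrow> finite E"
  unfolding simple_graph_def by (rule finite_subset[of E "Pow V"]) auto

lemma handshake_le:
  assumes "simple_graph V E" "S \<subseteq> V"
  shows "2 * card {e\<in>E. e \<subseteq> S} \<le> (\<Sum>v\<in>S. degree E v)"
proof -
  have finE: "finite E" using simple_finE[OF assms(1)] .
  have finS: "finite S" using assms unfolding simple_graph_def using finite_subset by blast
  have "2 * card {e\<in>E. e \<subseteq> S} = (\<Sum>e\<in>{e\<in>E. e \<subseteq> S}. card (e \<inter> S))"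
    using assms(1) unfolding simple_graph_def by (simp add: Int_absorb2)
  also have "\<dots> \<le> (\<Sum>e\<in>E. card (e \<inter> S))"
    using finE by (intro sum_mono2) auto
  finally show ?thesis using degree_sum_swap[OF finE finS] by simp
qed

lemma handshake_eq:
  assumes "simple_graph V E"
  shows "(\<Sum>v\<in>V. degree E v) = 2 * card E"
proof -
  have finE: "finite E" using simple_finE[OF assms(1)] .
  have "(\<Sum>v\<in>V. degree E v) = (\<Sum>e\<in>E. card (e \<inter> V))"
    using degree_sum_swap[OF finE] assms unfolding simple_graph_def by blast
  also have "\<dots> = (\<Sum>e\<in>E. 2)"
    using assms unfolding simple_graph_def by (intro sum.cong) (auto simp: Int_absorb2)
  finally show ?thesis by simp
qed

lemma cardimg:
  assumes "inj_on f A"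
  shows "card {b\<in>f ` A. Q b} = card {a\<in>A. Q (f a)}"
proof -
  have "{b\<in>f ` A. Q b} = f ` {a\<in>A. Q (f a)}" by auto
  then show ?thesis using card_image[OF inj_on_subset[OF assms]] by auto
qed

lemma arith_aux:
  fixes x m r a b :: nat
  assumes "x \<le> m * a" "x \<le> m * b" "r \<le> m"
  shows "x \<le> r * a + (m - r) * b"
proof (cases "a \<le> b")
  case True
  have "m * a = r * a + (m - r) * a" using assms(3) by (simp add: diff_mult_distrib)
  also have "\<dots> \<le> r * a + (m - r) * b" using True by simp
  finally show ?thesis using assms(1) by simp
next
  case False
  have "m * b = r * b + (m - r) * b" using assms(3) by (simp add: diff_mult_distrib)
  also have "\<dots> \<le> r * a + (m - r) * b" using False by simp
  finally show ?thesis using assms(2) by simp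
qed



lemma even_factor:
  fixes V :: "'a set" and E :: "'a set set"
  assumes G: "simple_graph V E" and reg: "\<forall>v\<in>V. degree E v = 2 * m" and rm: "r \<le> m"
  shows "\<exists>F\<subseteq>E. \<forall>v\<in>V. degree F v = 2 * r"
proof -
  have finV: "finite V" and EV: "\<forall>e\<in>E. e \<subseteq> V \<and> card e = 2"
    using G unfolding simple_graph_def by auto
  have finE: "finite E" using simple_finE[OF G] .
  have cardE: "card E = m * card V"
    using handshake_eq[OF G] reg by (simp, simp add: mult.commute)
  obtain \<sigma> where s1: "\<forall>e\<in>E. \<sigma> e \<in> e" and s2: "\<forall>v\<in>V. indeg E \<sigma> v = m"
  proof -
    have "\<exists>\<sigma>. (\<forall>e\<in>E. \<sigma> e \<in> e) \<and> (\<forall>v\<in>V. indeg E \<sigma> v = m)"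
    proof (rule hakimi[OF finV EV])
      show "(\<Sum>v\<in>V. m) = card E" using cardE by simp
      show "\<forall>S\<subseteq>V. card {e\<in>E. e \<subseteq> S} \<le> (\<Sum>v\<in>S. m)"
      proof (intro allI impI)
        fix S assume S: "S \<subseteq> V"
        have "2 * card {e\<in>E. e \<subseteq> S} \<le> (\<Sum>v\<in>S. degree E v)" by (rule handshake_le[OF G S])
        also have "\<dots> = (\<Sum>v\<in>S. 2 * m)" using reg S by (intro sum.cong) auto
        finally show "card {e\<in>E. e \<subseteq> S} \<le> (\<Sum>v\<in>S. m)" by simp
      qed
    qed
    then show ?thesis using that by blast
  qed
  define oth where "oth e = the_elem (e - {\<sigma> e})" for e
  have oth: "oth e \<in> e \<and> oth e \<noteq> \<sigma> e \<and> e = {oth e, \<sigma> e}" if "e \<in> E" for e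
  proof -
    have c: "card e = 2" "\<sigma> e \<in> e" using EV s1 that by auto
    obtain x y where xy: "e = {x,y}" "x \<noteq> y" using c(1) by (auto simp: card_2_iff)
    define a where "a = (if \<sigma> e = x then y else x)"
    have a: "a \<in> e" "a \<noteq> \<sigma> e" "e = {\<sigma> e, a}" using xy c(2) unfolding a_def by auto
    then have "e - {\<sigma> e} = {a}" by auto
    then have "oth e = a" unfolding oth_def by simp
    then show ?thesis using a by auto
  qed
  have outdeg: "card {e\<in>E. oth e = v} = m" if "v \<in> V" for v
  proof -
    have "{e\<in>E. v \<in> e} = {e\<in>E. oth e = v} \<union> {e\<in>E. \<sigma> e = v}"
    proof (intro equalityI subsetI)
      fix e assume "e \<in> {e\<in>E. v \<in> e}"
      then have e: "e \<in> E" "v \<in> e" by auto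
      have "v \<in> {oth e, \<sigma> e}" using oth[OF e(1)] e(2) by metis
      then show "e \<in> {e\<in>E. oth e = v} \<union> {e\<in>E. \<sigma> e = v}" using e by auto
    next
      fix e assume "e \<in> {e\<in>E. oth e = v} \<union> {e\<in>E. \<sigma> e = v}"
      then show "e \<in> {e\<in>E. v \<in> e}" using oth[of e] s1 by auto
    qed
    moreover have "{e\<in>E. oth e = v} \<inter> {e\<in>E. \<sigma> e = v} = {}" using oth by fastforce
    ultimately have "degree E v = card {e\<in>E. oth e = v} + indeg E \<sigma> v"
      unfolding degree_def indeg_def using finE by (simp add: card_Un_disjoint)
    then show ?thesis using reg s2 that by simp
  qed
  define \<beta> where "\<beta> e = {(oth e, True), (\<sigma> e, False)}" for e
  define EB where "EB = \<beta> ` E"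
  define VB where "VB = V \<times> (UNIV :: bool set)"
  have injb: "inj_on \<beta> E"
  proof (rule inj_onI)
    fix e e' assume e: "e \<in> E" "e' \<in> E" "\<beta> e = \<beta> e'"
    then have "oth e = oth e' \<and> \<sigma> e = \<sigma> e'" unfolding \<beta>_def by (auto simp: doubleton_eq_iff)
    then show "e = e'" using oth[OF e(1)] oth[OF e(2)] by metis
  qed
  have GB: "simple_graph VB EB"
    unfolding simple_graph_def VB_def EB_def
  proof (intro conjI ballI)
    show "finite (V \<times> (UNIV :: bool set))" using finV by simp
  next
    fix b assume "b \<in> \<beta> ` E"
    then obtain e where e: "e \<in> E" "b = \<beta> e" by blast
    show "b \<subseteq> V \<times> UNIV" using e oth[OF e(1)] s1 EV unfolding \<beta>_def by auto
    show "card b = 2" using e unfolding \<beta>_def by simp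
  qed
  have finEB: "finite EB" using simple_finE[OF GB] .
  have degB: "card {b\<in>EB. p \<in> b} = m" if pV: "p \<in> VB" for p
  proof -
    obtain v x where p: "p = (v, x)" "v \<in> V" using pV unfolding VB_def by (cases p) auto
    have "card {b\<in>EB. p \<in> b} = card {e\<in>E. p \<in> \<beta> e}"
      unfolding EB_def by (rule cardimg[OF injb])
    also have "\<dots> = m"
    proof (cases x)
      case True
      then have "{e\<in>E. p \<in> \<beta> e} = {e\<in>E. oth e = v}" using p unfolding \<beta>_def by auto
      then show ?thesis using outdeg p by simp
    next
      case False
      then have "{e\<in>E. p \<in> \<beta> e} = {e\<in>E. \<sigma> e = v}" using p unfolding \<beta>_def by auto
      then show ?thesis using s2 p unfolding indeg_def by simp
    qed
    finally show ?thesis .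
  qed
  define tB where "tB p = (if snd p then r else m - r)" for p :: "'a \<times> bool"
  obtain \<tau> where t1: "\<forall>b\<in>EB. \<tau> b \<in> b" and t2: "\<forall>p\<in>VB. indeg EB \<tau> p = tB p"
  proof -
    have "\<exists>\<tau>. (\<forall>b\<in>EB. \<tau> b \<in> b) \<and> (\<forall>p\<in>VB. indeg EB \<tau> p = tB p)"
    proof (rule hakimi)
      show "finite VB" "\<forall>e\<in>EB. e \<subseteq> VB \<and> card e = 2" using GB unfolding simple_graph_def by auto
      have "(\<Sum>p\<in>VB. tB p) = (\<Sum>v\<in>V. \<Sum>x\<in>(UNIV::bool set). tB (v, x))"
        unfolding VB_def by (simp add: sum.cartesian_product)
      also have "\<dots> = (\<Sum>v\<in>V. m)" using rm by (simp add: tB_def UNIV_bool)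
      also have "\<dots> = card EB" using cardE card_image[OF injb] unfolding EB_def by simp
      finally show "(\<Sum>p\<in>VB. tB p) = card EB" .
      show "\<forall>S\<subseteq>VB. card {e\<in>EB. e \<subseteq> S} \<le> (\<Sum>p\<in>S. tB p)"
      proof (intro allI impI)
        fix S assume S: "S \<subseteq> VB"
        have finS: "finite S" using S GB unfolding simple_graph_def using finite_subset by blast
        define ST where "ST = S \<inter> {p. snd p}"
        define SF where "SF = S \<inter> - {p. snd p}"
        have sumS: "(\<Sum>p\<in>S. tB p) = r * card ST + (m - r) * card SF"
          unfolding tB_def ST_def SF_def using finS by (simp add: sum.If_cases)
        have bound: "card {e\<in>EB. e \<subseteq> S} \<le> m * card X"
          if X: "X \<subseteq> S" and cov: "\<forall>b\<in>EB. b \<subseteq> S \<longrightarrow> b \<inter> X \<noteq> {}" for X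
        proof -
          have finX: "finite X" using X finS finite_subset by blast
          have "{e\<in>EB. e \<subseteq> S} \<subseteq> (\<Union>p\<in>X. {b\<in>EB. p \<in> b})" using cov by blast
          then have "card {e\<in>EB. e \<subseteq> S} \<le> card (\<Union>p\<in>X. {b\<in>EB. p \<in> b})"
            using finX finEB by (intro card_mono) auto
          also have "\<dots> \<le> (\<Sum>p\<in>X. card {b\<in>EB. p \<in> b})" by (rule card_UN_le[OF finX])
          also have "\<dots> = (\<Sum>p\<in>X. m)" using degB X S by (intro sum.cong) auto
          finally show ?thesis by (simp add: mult.commute)
        qed
        have b1: "card {e\<in>EB. e \<subseteq> S} \<le> m * card ST"
        proof (rule bound)
          show "ST \<subseteq> S" unfolding ST_def by auto
          show "\<forall>b\<in>EB. b \<subseteq> S \<longrightarrow> b \<inter> ST \<noteq> {}"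
            unfolding EB_def ST_def \<beta>_def by auto
        qed
        have b2: "card {e\<in>EB. e \<subseteq> S} \<le> m * card SF"
        proof (rule bound)
          show "SF \<subseteq> S" unfolding SF_def by auto
          show "\<forall>b\<in>EB. b \<subseteq> S \<longrightarrow> b \<inter> SF \<noteq> {}"
            unfolding EB_def SF_def \<beta>_def by auto
        qed
        show "card {e\<in>EB. e \<subseteq> S} \<le> (\<Sum>p\<in>S. tB p)"
          unfolding sumS by (rule arith_aux[OF b1 b2 rm])
      qed
    qed
    then show ?thesis using that by blast
  qed
  have oth1: "oth e \<in> e" "oth e \<noteq> \<sigma> e" if "e \<in> E" for e using oth[OF that] by auto
  have memb: "v = oth e \<or> v = \<sigma> e" if "e \<in> E" "v \<in> e" for e v
  proof -
    have "v \<in> {oth e, \<sigma> e}" using oth[OF that(1)] that(2) by metis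
    then show ?thesis by auto
  qed
  define F where "F = {e\<in>E. \<tau> (\<beta> e) = (oth e, True)}"
  have tb: "\<tau> (\<beta> e) = (oth e, True) \<or> \<tau> (\<beta> e) = (\<sigma> e, False)" if "e \<in> E" for e
  proof -
    have "\<beta> e \<in> EB" using that unfolding EB_def by auto
    then have "\<tau> (\<beta> e) \<in> \<beta> e" using t1 by blast
    then show ?thesis unfolding \<beta>_def by auto
  qed
  show ?thesis
  proof (intro exI[of _ F] conjI ballI)
    show "F \<subseteq> E" unfolding F_def by auto
  next
    fix v assume vV: "v \<in> V"
    define A1 where "A1 = {e\<in>E. \<tau> (\<beta> e) = (v, True)}"
    define A2 where "A2 = {e\<in>E. \<sigma> e = v} - {e\<in>E. \<tau> (\<beta> e) = (v, False)}"
    have eq: "{e\<in>F. v \<in> e} = A1 \<union> A2"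
    proof (intro equalityI subsetI)
      fix e assume "e \<in> {e\<in>F. v \<in> e}"
      then have e: "e \<in> E" "\<tau> (\<beta> e) = (oth e, True)" "v \<in> e" unfolding F_def by auto
      have "v = oth e \<or> v = \<sigma> e" using memb[OF e(1,3)] .
      then show "e \<in> A1 \<union> A2"
      proof
        assume "v = oth e" then show ?thesis using e unfolding A1_def by auto
      next
        assume "v = \<sigma> e" then show ?thesis using e oth1[OF e(1)] unfolding A2_def by auto
      qed
    next
      fix e assume a: "e \<in> A1 \<union> A2"
      then have eE: "e \<in> E" unfolding A1_def A2_def by auto
      show "e \<in> {e\<in>F. v \<in> e}"
        using a
      proof
        assume "e \<in> A1"
        then have "\<tau> (\<beta> e) = (v, True)" unfolding A1_def by auto
        then have "v = oth e" "\<tau> (\<beta> e) = (oth e, True)" using tb[OF eE] by auto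
        then show ?thesis using eE oth1[OF eE] unfolding F_def by auto
      next
        assume "e \<in> A2"
        then have "\<sigma> e = v" "\<tau> (\<beta> e) \<noteq> (v, False)" unfolding A2_def using eE by auto
        then have "\<tau> (\<beta> e) = (oth e, True)" using tb[OF eE] by auto
        then show ?thesis using eE s1 \<open>\<sigma> e = v\<close> unfolding F_def by auto
      qed
    qed
    have disj: "A1 \<inter> A2 = {}"
    proof (rule ccontr)
      assume "A1 \<inter> A2 \<noteq> {}"
      then obtain e where e: "e \<in> E" "\<tau> (\<beta> e) = (v, True)" "\<sigma> e = v"
        unfolding A1_def A2_def by blast
      then have "oth e = v" using tb[OF e(1)] by auto
      then show False using oth1[OF e(1)] e(3) by simp
    qed
    have c1: "card A1 = r"
    proof -
      have "card A1 = card {b\<in>EB. \<tau> b = (v, True)}"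
        unfolding A1_def EB_def by (rule cardimg[OF injb, symmetric])
      also have "\<dots> = indeg EB \<tau> (v, True)" unfolding indeg_def ..
      also have "\<dots> = r" using t2 vV unfolding VB_def tB_def by auto
      finally show ?thesis .
    qed
    have c2: "card A2 = r"
    proof -
      have sub: "{e\<in>E. \<tau> (\<beta> e) = (v, False)} \<subseteq> {e\<in>E. \<sigma> e = v}"
      proof safe
        fix e assume "e \<in> E" "\<tau> (\<beta> e) = (v, False)"
        then show "\<sigma> e = v" using tb[of e] by auto
      qed
      have "card {e\<in>E. \<tau> (\<beta> e) = (v, False)} = card {b\<in>EB. \<tau> b = (v, False)}"
        unfolding EB_def by (rule cardimg[OF injb, symmetric])
      also have "\<dots> = indeg EB \<tau> (v, False)" unfolding indeg_def ..
      also have "\<dots> = m - r" using t2 vV unfolding VB_def tB_def by auto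
      finally have x1: "card {e\<in>E. \<tau> (\<beta> e) = (v, False)} = m - r" .
      have x2: "card {e\<in>E. \<sigma> e = v} = m" using s2 vV unfolding indeg_def by auto
      have "card A2 = card {e\<in>E. \<sigma> e = v} - card {e\<in>E. \<tau> (\<beta> e) = (v, False)}"
        unfolding A2_def by (rule card_Diff_subset) (use finE sub in auto)
      then show ?thesis using x1 x2 rm by simp
    qed
    have fin12: "finite A1" "finite A2" using finE unfolding A1_def A2_def by auto
    have "card {e\<in>F. v \<in> e} = 2 * r"
      unfolding eq using card_Un_disjoint[OF fin12 disj] c1 c2 by simp
    then show "degree F v = 2 * r" unfolding degree_def .
  qed
qed



lemma double_deg:
  fixes V :: "'a set" and E :: "'a set set"
  defines "emb \<equiv> \<lambda>b e. (\<lambda>x. (x, b)) ` e"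
  defines "M \<equiv> (\<lambda>v. {(v,True),(v,False)}) ` V"
  assumes vV: "v \<in> V" and EV: "\<forall>e\<in>E. e \<subseteq> V \<and> card e = 2" and FE: "F2 \<subseteq> emb True ` E \<union> emb False ` E \<union> M"
  shows "{e\<in>F2. (v,b) \<in> e} = emb b ` {e\<in>E. emb b e \<in> F2 \<and> v \<in> e} \<union> ({{(v,True),(v,False)}} \<inter> F2)"
proof (intro equalityI subsetI)
  fix x assume x: "x \<in> {e\<in>F2. (v,b) \<in> e}"
  then have "x \<in> emb True ` E \<union> emb False ` E \<union> M" using FE by auto
  then show "x \<in> emb b ` {e\<in>E. emb b e \<in> F2 \<and> v \<in> e} \<union> ({{(v,True),(v,False)}} \<inter> F2)"
    using x unfolding emb_def M_def by auto
next
  fix x assume x: "x \<in> emb b ` {e\<in>E. emb b e \<in> F2 \<and> v \<in> e} \<union> ({{(v,True),(v,False)}} \<inter> F2)"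
  then show "x \<in> {e\<in>F2. (v,b) \<in> e}" unfolding emb_def by (cases b) auto
qed

lemma emb_inj: "inj_on (\<lambda>e. (\<lambda>x. (x, b)) ` e) A"
  by (rule inj_onI) (auto simp: inj_image_eq_iff inj_on_def)

lemma mdisj: "{(v,True),(v,False)} \<notin> (\<lambda>e. (\<lambda>x. (x, b)) ` e) ` A"
  by (cases b) auto

theorem lemma2p3:
  fixes V :: "'a set" and E :: "'a set set" and k d :: int
  assumes "even k" and "0 \<le> k" and "k \<le> d"
    and "simple_graph V E" and "regular V E (nat d)"
  shows "\<exists>E' \<subseteq> E. \<forall>v\<in>V. int (degree E' v) = k \<or> int (degree E' v) = k - 1"
proof -
  define r where "r = nat (k div 2)"
  have kr: "k = 2 * int r" using assms(1,2) unfolding r_def by (auto elim!: evenE)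
  have rd: "2 * r \<le> nat d" using assms(3) kr by linarith
  have G: "simple_graph V E" and reg: "\<forall>v\<in>V. degree E v = nat d"
    using assms(4,5) unfolding regular_def by auto
  show ?thesis
  proof (cases "even (nat d)")
    case True
    then obtain m where m: "nat d = 2 * m" by (auto elim: evenE)
    obtain F where F: "F \<subseteq> E" "\<forall>v\<in>V. degree F v = 2 * r"
      using even_factor[OF G _, of m r] reg m rd by auto
    then show ?thesis using kr by (intro exI[of _ F]) auto
  next
    case False
    define m where "m = (nat d + 1) div 2"
    have m: "nat d + 1 = 2 * m" using False unfolding m_def by (auto elim!: oddE)
    have rm: "r \<le> m" using rd m by linarith
    define emb where "emb = (\<lambda>(b::bool) e. (\<lambda>x. (x, b)) ` (e :: 'a set))"
    define M where "M = (\<lambda>v. {(v,True),(v,False)}) ` V"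
    define E2 where "E2 = emb True ` E \<union> emb False ` E \<union> M"
    define V2 where "V2 = V \<times> (UNIV :: bool set)"
    have EV: "\<forall>e\<in>E. e \<subseteq> V \<and> card e = 2" and finV: "finite V" using G unfolding simple_graph_def by auto
    have cemb: "card (emb b e) = card e" for b e
      unfolding emb_def by (rule card_image) (auto simp: inj_on_def)
    have G2: "simple_graph V2 E2"
      unfolding simple_graph_def
    proof (rule conjI)
      show "finite V2" using finV unfolding V2_def by simp
    next
      show "\<forall>x\<in>E2. x \<subseteq> V2 \<and> card x = 2"
      proof
      fix x assume "x \<in> E2"
      then consider (a) b e where "e \<in> E" "x = emb b e" | (c) v where "v \<in> V" "x = {(v,True),(v,False)}"
        unfolding E2_def M_def by auto
      then show "x \<subseteq> V2 \<and> card x = 2"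
      proof cases
        case a then show ?thesis using EV cemb[of b e] unfolding V2_def emb_def by auto
      next
        case c then show ?thesis unfolding V2_def by auto
      qed
      qed
    qed
    have reg2: "\<forall>p\<in>V2. degree E2 p = 2 * m"
    proof
      fix p assume "p \<in> V2"
      then obtain v b where p: "p = (v, b)" "v \<in> V" unfolding V2_def by (cases p) auto
      have "{e\<in>E2. (v,b) \<in> e} = emb b ` {e\<in>E. emb b e \<in> E2 \<and> v \<in> e} \<union> ({{(v,True),(v,False)}} \<inter> E2)"
        unfolding emb_def by (rule double_deg[OF p(2) EV]) (simp add: E2_def emb_def M_def)
      also have "{e\<in>E. emb b e \<in> E2 \<and> v \<in> e} = {e\<in>E. v \<in> e}" unfolding E2_def by (cases b) auto
      also have "{{(v,True),(v,False)}} \<inter> E2 = {{(v,True),(v,False)}}" using p unfolding E2_def M_def by auto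
      finally have eq: "{e\<in>E2. (v,b) \<in> e} = emb b ` {e\<in>E. v \<in> e} \<union> {{(v,True),(v,False)}}" .
      have "card (emb b ` {e\<in>E. v \<in> e}) = degree E v"
        unfolding degree_def emb_def by (rule card_image[OF emb_inj])
      moreover have "finite (emb b ` {e\<in>E. v \<in> e})" using simple_finE[OF G] by simp
      moreover have "{(v,True),(v,False)} \<notin> emb b ` {e\<in>E. v \<in> e}" unfolding emb_def by (rule mdisj)
      ultimately have "card {e\<in>E2. (v,b) \<in> e} = degree E v + 1" unfolding eq by simp
      then show "degree E2 p = 2 * m" using p reg m unfolding degree_def by simp
    qed
    obtain F2 where F2: "F2 \<subseteq> E2" "\<forall>p\<in>V2. degree F2 p = 2 * r"
      using even_factor[OF G2 reg2 rm] by auto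
    define F where "F = {e\<in>E. emb True e \<in> F2}"
    show ?thesis
    proof (intro exI[of _ F] conjI ballI)
      show "F \<subseteq> E" unfolding F_def by auto
    next
      fix v assume vV: "v \<in> V"
      have eq: "{e\<in>F2. (v,True) \<in> e} = emb True ` {e\<in>E. emb True e \<in> F2 \<and> v \<in> e} \<union> ({{(v,True),(v,False)}} \<inter> F2)"
        unfolding emb_def by (rule double_deg[OF vV EV]) (use F2(1) in \<open>simp add: E2_def emb_def M_def\<close>)
      have c1: "card (emb True ` {e\<in>E. emb True e \<in> F2 \<and> v \<in> e}) = degree F v"
        unfolding degree_def emb_def F_def
        by (subst card_image[OF emb_inj]) (auto intro: arg_cong[where f=card])
      have fin1: "finite (emb True ` {e\<in>E. emb True e \<in> F2 \<and> v \<in> e})" using simple_finE[OF G] by simp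
      have d: "emb True ` {e\<in>E. emb True e \<in> F2 \<and> v \<in> e} \<inter> ({{(v,True),(v,False)}} \<inter> F2) = {}"
        using mdisj[of v True] unfolding emb_def by blast
      have "card {e\<in>F2. (v,True) \<in> e} = degree F v + card ({{(v,True),(v,False)}} \<inter> F2)"
        unfolding eq using card_Un_disjoint[OF fin1 _ d] c1 by simp
      moreover have "card ({{(v,True),(v,False)}} \<inter> F2) \<le> 1" by (simp add: card_le_Suc0_iff_eq)
      moreover have "card {e\<in>F2. (v,True) \<in> e} = 2 * r" using F2(2) vV unfolding V2_def degree_def by auto
      ultimately have "degree F v = 2 * r \<or> degree F v + 1 = 2 * r" by linarith
      then show "int (degree F v) = k \<or> int (degree F v) = k - 1" using kr by auto
    qed
  qed
qed

end
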